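(* Let $G$ be a graph with vertex set $[n]$. Then the set $\mathrm{FPF}(G)$ of $G$-friendship parking functions is non-empty if and only if $G$ contains a Hamiltonian path.
   Context: $[n]=\{1,\dots,n\}$. A parking preference is a vector $p=(p_1,\dots,p_n)\in[n]^n$; $p_i$ is the preferred spot of car $i$ in a one-way street with spots $1,\dots,n$. Friendship parking process for a graph $G$ on vertex set $[n]$: cars $1,\dots,n$ enter in this order, all spots initially unoccupied. A spot $k$ is available for car $i$ if it is unoccupied when car $i$ enters, and each of the neighbouring spots $k-1$ and $k+1$ is either unoccupied or occupied by a car $j$ that is adjacent to $i$ in $G$ (spots $0$ and $n+1$ are considered unoccupied). Car $i$ parks in the first spot $k\ge p_i$ that is available for it; if none exists, car $i$ fails to park. $p$ is a $G$-friendship parking function if all $n$ cars park; $\mathrm{FPF}(G)$ denotes the set of these. A Hamiltonian path of $G$ is a sequence of all $n$ distinct vertices $(v_1,\dots,v_n)$ with $\{v_k,v_{k+1}\}$ an edge of $G$ for all $k\in[n-1]$. *)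

theory Defs
  imports Main
begin

text \<open>A parking state is a map from spots to the car occupying it (None = unoccupied).\<close>

definition simple_graph_on :: "nat \<Rightarrow> (nat \<Rightarrow> nat \<Rightarrow> bool) \<Rightarrow> bool" where
  "simple_graph_on n E \<longleftrightarrow>
     (\<forall>u v. E u v \<longrightarrow> u \<in> {1..n} \<and> v \<in> {1..n}) \<and>
     (\<forall>u v. E u v \<longrightarrow> E v u) \<and> (\<forall>u. \<not> E u u)"

text \<open>Neighbouring spot s is unoccupied or occupied by a car adjacent to i.
  Spots 0 and n+1 are never occupied in the process (only spots in [n] get filled).\<close>
definition ok_neighbour :: "(nat \<Rightarrow> nat \<Rightarrow> bool) \<Rightarrow> (nat \<Rightarrow> nat option) \<Rightarrow> nat \<Rightarrow> nat \<Rightarrow> bool" where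
  "ok_neighbour E occ i s \<longleftrightarrow> (case occ s of None \<Rightarrow> True | Some j \<Rightarrow> E i j)"

definition available :: "nat \<Rightarrow> (nat \<Rightarrow> nat \<Rightarrow> bool) \<Rightarrow> (nat \<Rightarrow> nat option) \<Rightarrow> nat \<Rightarrow> nat \<Rightarrow> bool" where
  "available n E occ i k \<longleftrightarrow>
     k \<in> {1..n} \<and> occ k = None \<and> ok_neighbour E occ i (k - 1) \<and> ok_neighbour E occ i (k + 1)"

definition park_car :: "nat \<Rightarrow> (nat \<Rightarrow> nat \<Rightarrow> bool) \<Rightarrow> nat \<Rightarrow> nat \<Rightarrow> (nat \<Rightarrow> nat option) \<Rightarrow> (nat \<Rightarrow> nat option) option" where
  "park_car n E i q occ =
     (if \<exists>k. q \<le> k \<and> available n E occ i k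
      then Some (occ((LEAST k. q \<le> k \<and> available n E occ i k) := Some i))
      else None)"

text \<open>Run cars 1..m in order; preference of car i is p ! (i-1).\<close>
fun run_cars :: "nat \<Rightarrow> (nat \<Rightarrow> nat \<Rightarrow> bool) \<Rightarrow> nat list \<Rightarrow> nat \<Rightarrow> (nat \<Rightarrow> nat option) option" where
  "run_cars n E p 0 = Some (\<lambda>_. None)"
| "run_cars n E p (Suc m) =
     (case run_cars n E p m of None \<Rightarrow> None
      | Some occ \<Rightarrow> park_car n E (Suc m) (p ! m) occ)"

definition FPF :: "nat \<Rightarrow> (nat \<Rightarrow> nat \<Rightarrow> bool) \<Rightarrow> nat list set" where
  "FPF n E = {p. length p = n \<and> set p \<subseteq> {1..n} \<and> run_cars n E p n \<noteq> None}"

definition hamiltonian_path :: "nat \<Rightarrow> (nat \<Rightarrow> nat \<Rightarrow> bool) \<Rightarrow> nat list \<Rightarrow> bool" where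
  "hamiltonian_path n E vs \<longleftrightarrow>
     length vs = n \<and> distinct vs \<and> set vs = {1..n} \<and>
     (\<forall>k. Suc k < n \<longrightarrow> E (vs ! k) (vs ! Suc k))"

end

theory Submission
  imports Defs
begin

definition inv_occ :: "nat \<Rightarrow> (nat \<Rightarrow> nat \<Rightarrow> bool) \<Rightarrow> nat \<Rightarrow> (nat \<Rightarrow> nat option) \<Rightarrow> bool" where
  "inv_occ n E m occ \<longleftrightarrow>
     {k. occ k \<noteq> None} \<subseteq> {1..n} \<and> card {k. occ k \<noteq> None} = m \<and>
     (\<forall>k i. occ k = Some i \<longrightarrow> i \<in> {1..m}) \<and>
     (\<forall>k k' i. occ k = Some i \<longrightarrow> occ k' = Some i \<longrightarrow> k = k') \<and>
     (\<forall>k i j. occ k = Some i \<longrightarrow> occ (Suc k) = Some j \<longrightarrow> E i j)"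

lemma run_inv:
  assumes G: "simple_graph_on n E"
  shows "run_cars n E p m = Some occ \<Longrightarrow> inv_occ n E m occ"
proof (induction m arbitrary: occ)
  case 0
  then show ?case by (auto simp: inv_occ_def)
next
  case (Suc m)
  from Suc.prems obtain occ0 where r0: "run_cars n E p m = Some occ0"
    and pc: "park_car n E (Suc m) (p ! m) occ0 = Some occ"
    by (auto split: option.splits)
  have I: "inv_occ n E m occ0" using Suc.IH r0 by blast
  define q where "q = p ! m"
  define K where "K = (LEAST k. q \<le> k \<and> available n E occ0 (Suc m) k)"
  from pc have ex: "\<exists>k. q \<le> k \<and> available n E occ0 (Suc m) k"
    and occ: "occ = occ0(K := Some (Suc m))"
    unfolding park_car_def q_def K_def by (auto split: if_splits)
  have av: "available n E occ0 (Suc m) K" unfolding K_def using LeastI_ex[OF ex] by blast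
  hence K1: "K \<in> {1..n}" and Kn: "occ0 K = None"
    and nl: "ok_neighbour E occ0 (Suc m) (K - 1)" and nr: "ok_neighbour E occ0 (Suc m) (K + 1)"
    by (auto simp: available_def)
  have sym: "\<And>u v. E u v \<Longrightarrow> E v u" using G by (auto simp: simple_graph_on_def)
  have S: "{k. occ k \<noteq> None} = insert K {k. occ0 k \<noteq> None}" using occ by auto
  have fin: "finite {k. occ0 k \<noteq> None}" using I unfolding inv_occ_def
    by (meson finite_atLeastAtMost finite_subset)
  have c: "card {k. occ k \<noteq> None} = Suc m" using I Kn fin unfolding S inv_occ_def by simp
  have sub: "{k. occ k \<noteq> None} \<subseteq> {1..n}" using I K1 unfolding S inv_occ_def by auto
  have old: "\<And>k i. occ0 k = Some i \<Longrightarrow> i \<in> {1..m}" using I unfolding inv_occ_def by blast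
  have vals: "\<forall>k i. occ k = Some i \<longrightarrow> i \<in> {1..Suc m}"
  proof (intro allI impI)
    fix k i assume a: "occ k = Some i"
    show "i \<in> {1..Suc m}"
    proof (cases "k = K")
      case True then show ?thesis using a occ by simp
    next
      case False then have "occ0 k = Some i" using a occ by simp
      then show ?thesis using old by fastforce
    qed
  qed
  have injv: "\<forall>k k' i. occ k = Some i \<longrightarrow> occ k' = Some i \<longrightarrow> k = k'"
  proof (intro allI impI)
    fix k k' i assume a: "occ k = Some i" "occ k' = Some i"
    show "k = k'"
    proof (cases "k = K")
      case True
      then have i: "i = Suc m" using a occ by simp
      show ?thesis
      proof (rule ccontr)
        assume "k \<noteq> k'"
        then have "occ0 k' = Some (Suc m)" using a occ True i by simp
        then show False using old by fastforce
      qed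
    next
      case False
      then have o1: "occ0 k = Some i" using a occ by simp
      show ?thesis
      proof (cases "k' = K")
        case True
        then have "i = Suc m" using a occ by simp
        then show ?thesis using o1 old by fastforce
      next
        case False
        then have "occ0 k' = Some i" using a occ by simp
        then show ?thesis using o1 I unfolding inv_occ_def by blast
      qed
    qed
  qed
  have adj: "\<forall>k i j. occ k = Some i \<longrightarrow> occ (Suc k) = Some j \<longrightarrow> E i j"
  proof (intro allI impI)
    fix k i j assume a: "occ k = Some i" "occ (Suc k) = Some j"
    show "E i j"
    proof (cases "k = K")
      case True
      then have "occ0 (K+1) = Some j" "i = Suc m" using a occ by auto
      then show ?thesis using nr by (simp add: ok_neighbour_def)
    next
      case F: False
      show ?thesis
      proof (cases "Suc k = K")
        case True
        then have "occ0 (K-1) = Some i" "j = Suc m" using a occ F by auto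
        then have "E (Suc m) i" using nl by (simp add: ok_neighbour_def)
        then show ?thesis using sym `j = Suc m` by blast
      next
        case False
        then show ?thesis using a occ F I unfolding inv_occ_def by auto
      qed
    qed
  qed
  show ?case unfolding inv_occ_def using sub c vals injv adj by blast
qed

lemma fwd:
  assumes G: "simple_graph_on n E" and r: "run_cars n E p n = Some occ"
  shows "\<exists>vs. hamiltonian_path n E vs"
proof -
  have I: "inv_occ n E n occ" using run_inv[OF G r] .
  have all: "{k. occ k \<noteq> None} = {1..n}" using I unfolding inv_occ_def
    by (metis card_atLeastAtMost card_subset_eq diff_Suc_1 finite_atLeastAtMost)
  define vs where "vs = map (\<lambda>k. the (occ k)) [1..<Suc n]"
  have len: "length vs = n" by (simp add: vs_def)
  have nth: "\<And>k. k < n \<Longrightarrow> vs ! k = the (occ (Suc k))" by (simp add: vs_def del: upt_Suc)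
  have occk: "\<And>k. k < n \<Longrightarrow> occ (Suc k) = Some (vs ! k)"
  proof -
    fix k assume k: "k < n"
    then have "Suc k \<in> {k. occ k \<noteq> None}" using all by simp
    then show "occ (Suc k) = Some (vs ! k)" using nth[OF k] by auto
  qed
  have dist: "distinct vs"
    unfolding distinct_conv_nth len
  proof (intro allI impI)
    fix i j assume "i < n" "j < n" "i \<noteq> j"
    then show "vs ! i \<noteq> vs ! j" using occk I unfolding inv_occ_def by (metis Suc_inject)
  qed
  have setsub: "set vs \<subseteq> {1..n}"
    using occk I unfolding inv_occ_def by (metis in_set_conv_nth len subsetI)
  have setv: "set vs = {1..n}"
    using setsub distinct_card[OF dist] len
    by (metis card_atLeastAtMost card_subset_eq diff_Suc_1 finite_atLeastAtMost)
  have edges: "\<forall>k. Suc k < n \<longrightarrow> E (vs ! k) (vs ! Suc k)"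
    using occk I unfolding inv_occ_def by (meson Suc_lessD)
  show ?thesis unfolding hamiltonian_path_def using len dist setv edges by blast
qed

lemma bwd:
  assumes G: "simple_graph_on n E" and H: "hamiltonian_path n E vs"
  shows "FPF n E \<noteq> {}"
proof -
  have len: "length vs = n" and dist: "distinct vs" and setv: "set vs = {1..n}"
    and ed: "\<And>k. Suc k < n \<Longrightarrow> E (vs ! k) (vs ! Suc k)"
    using H by (auto simp: hamiltonian_path_def)
  have sym: "\<And>u v. E u v \<Longrightarrow> E v u" using G by (auto simp: simple_graph_on_def)
  define pos where "pos i = (THE k. k < n \<and> vs ! k = i)" for i
  have posp: "pos i < n \<and> vs ! pos i = i" if "i \<in> {1..n}" for i
  proof -
    have "\<exists>!k. k < n \<and> vs ! k = i"
      using distinct_Ex1[OF dist, of i] that setv len by simp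
    then show ?thesis unfolding pos_def by (rule theI')
  qed
  have vsin: "\<And>k. k < n \<Longrightarrow> vs ! k \<in> {1..n}" using setv len nth_mem by blast
  have vsinj: "\<And>a b. a < n \<Longrightarrow> b < n \<Longrightarrow> vs ! a = vs ! b \<Longrightarrow> a = b"
    using dist len nth_eq_iff_index_eq by blast
  define p where "p = map (\<lambda>i. Suc (pos i)) [1..<Suc n]"
  define Oc where "Oc m = (\<lambda>k. if 1 \<le> k \<and> k \<le> n \<and> vs ! (k - 1) \<le> m then Some (vs ! (k - 1)) else None)" for m
  have step: "m \<le> n \<Longrightarrow> run_cars n E p m = Some (Oc m)" for m
  proof (induction m)
    case 0
    have "Oc 0 = (\<lambda>_. None)"
    proof
      fix k
      show "Oc 0 k = None"
      proof (cases "1 \<le> k \<and> k \<le> n")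
        case True
        then have "k - 1 < n" by linarith
        then have "vs ! (k - 1) \<in> {1..n}" using vsin by blast
        then show ?thesis by (simp add: Oc_def)
      qed (auto simp: Oc_def)
    qed
    then show ?case by simp
  next
    case (Suc m)
    have mn: "m < n" using Suc.prems by simp
    have pm: "p ! m = Suc (pos (Suc m))" unfolding p_def using mn by (simp del: upt_Suc)
    define k0 where "k0 = Suc (pos (Suc m))"
    have sm: "Suc m \<in> {1..n}" using mn by simp
    have pk: "pos (Suc m) < n" "vs ! pos (Suc m) = Suc m" using posp[OF sm] by auto
    have avk: "available n E (Oc m) (Suc m) k0"
      unfolding available_def
    proof (intro conjI)
      show "k0 \<in> {1..n}" using pk k0_def by simp
      show "Oc m k0 = None" using pk by (simp add: Oc_def k0_def)
      show "ok_neighbour E (Oc m) (Suc m) (k0 - 1)"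
      proof (cases "pos (Suc m)")
        case 0 then show ?thesis by (simp add: ok_neighbour_def Oc_def k0_def)
      next
        case (Suc j)
        have jn: "Suc j < n" using pk(1) Suc by simp
        have ej: "E (vs ! j) (vs ! Suc j)" using ed[OF jn] .
        have "E (Suc m) (vs ! j)" using sym[OF ej] pk Suc by simp
        then show ?thesis using Suc by (simp add: ok_neighbour_def Oc_def k0_def)
      qed
      show "ok_neighbour E (Oc m) (Suc m) (k0 + 1)"
      proof (cases "Suc (pos (Suc m)) < n")
        case True
        have "E (Suc m) (vs ! Suc (pos (Suc m)))" using ed[OF True] pk by simp
        then show ?thesis by (simp add: ok_neighbour_def Oc_def k0_def)
      next
        case False then show ?thesis by (simp add: ok_neighbour_def Oc_def k0_def)
      qed
    qed
    have least: "(LEAST k. k0 \<le> k \<and> available n E (Oc m) (Suc m) k) = k0"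
      by (rule Least_equality) (use avk in auto)
    have upd: "(Oc m)(k0 := Some (Suc m)) = Oc (Suc m)"
    proof
      fix k
      show "((Oc m)(k0 := Some (Suc m))) k = Oc (Suc m) k"
      proof (cases "k = k0")
        case True then show ?thesis using pk by (simp add: Oc_def k0_def)
      next
        case False
        have "1 \<le> k \<Longrightarrow> k \<le> n \<Longrightarrow> vs ! (k - 1) \<noteq> Suc m"
          using False pk vsinj[of "k - 1" "pos (Suc m)"] unfolding k0_def by auto
        then show ?thesis using False by (auto simp: Oc_def)
      qed
    qed
    have r: "run_cars n E p m = Some (Oc m)" using Suc.IH mn by simp
    have "park_car n E (Suc m) (p ! m) (Oc m) = Some (Oc (Suc m))"
      unfolding park_car_def pm k0_def[symmetric] least upd using avk by auto
    then show ?case using r by simp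
  qed
  have "p \<in> FPF n E"
    unfolding FPF_def
  proof (intro CollectI conjI)
    show "length p = n" by (simp add: p_def)
    show "set p \<subseteq> {1..n}" unfolding p_def using posp by (auto simp: Suc_le_eq)
    show "run_cars n E p n \<noteq> None" using step by simp
  qed
  then show ?thesis by blast
qed

theorem proposition2p1:
  fixes n :: nat and E :: "nat \<Rightarrow> nat \<Rightarrow> bool"
  assumes "simple_graph_on n E"
  shows "FPF n E \<noteq> {} \<longleftrightarrow> (\<exists>vs. hamiltonian_path n E vs)"
proof
  assume "FPF n E \<noteq> {}"
  then obtain p where "run_cars n E p n \<noteq> None" by (auto simp: FPF_def)
  then obtain occ where "run_cars n E p n = Some occ" by blast
  then show "\<exists>vs. hamiltonian_path n E vs" using fwd assms by blast
next
  assume "\<exists>vs. hamiltonian_path n E vs"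
  then show "FPF n E \<noteq> {}" using bwd assms by blast
qed

end
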